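(* Let $h$ be a bilinear form on $V$. For every double vector $\omega\in\mathcal D(V)$, $$\widehat h_R(\omega)=e^h\circ\omega\quad\text{and}\quad\widehat h_L(\omega)=\omega\circ e^{(h^t)},$$ where $e^h=\sum_{p\geq0}\frac{h^p}{p!}$.
   Context: $(V,g)$ is a Euclidean real vector space of dimension $n$, identified with $V^*$ via $g$, so double forms and double vectors $\mathcal D(V)=\bigoplus_{p,q}\Lambda^pV\otimes\Lambda^qV$ are identified; $\Lambda V$ carries the inner product induced by $g$. Exterior product: $(\theta_1\otimes\theta_2)(\theta_3\otimes\theta_4)=(\theta_1\wedge\theta_3)\otimes(\theta_2\wedge\theta_4)$; powers $h^p$ are for this product, $h^0=1$, and $h$ is regarded as a $(1,1)$ double vector. Composition product: $(\theta_1\otimes\theta_2)\circ(\theta_3\otimes\theta_4)=\langle\theta_1,\theta_4\rangle\theta_3\otimes\theta_2$ ($0$ if $\theta_1,\theta_4$ have different degrees), extended bilinearly. Transpose: $h^t(x,y)=h(y,x)$. $\bar h$ is the endomorphism of $V$ with $\langle\bar h(v),w\rangle=h(v,w)$, $\widehat h$ the exterior algebra endomorphism of $\Lambda V$ with $\widehat h(1)=1$, $\widehat h(v_1\wedge\cdots\wedge v_p)=\bar h(v_1)\wedge\cdots\wedge\bar h(v_p)$, and $\widehat h_R(\theta_1\otimes\theta_2)=\theta_1\otimes\widehat h(\theta_2)$, $\widehat h_L(\theta_1\otimes\theta_2)=\widehat h(\theta_1)\otimes\theta_2$, extended linearly. *)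

theory Defs
  imports "HOL-Analysis.Analysis"
begin

text \<open>Model: V = real^'n with the standard (orthonormal) basis e_i = axis i 1.
  The index type carries a linear order, used to order basis wedges
  e_I = e_{i_1} wedge ... wedge e_{i_p} with i_1 < ... < i_p.
  An element of Lambda V is given by its coefficients on the orthonormal basis (e_I)_I,
  a double vector by its coefficients on the basis (e_I (x) e_J)_{I,J}.\<close>

type_synonym 'n extv = "'n set \<Rightarrow> real"
type_synonym 'n dvec = "'n set \<Rightarrow> 'n set \<Rightarrow> real"

text \<open>Sign of e_I wedge e_K relative to e_{I union K} (I, K disjoint).\<close>
definition inv_sign :: "'n::linorder set \<Rightarrow> 'n set \<Rightarrow> real" where
  "inv_sign I K = (-1) ^ card {(i, k). i \<in> I \<and> k \<in> K \<and> k < i}"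

definition ext_one :: "'n extv" where
  "ext_one = (\<lambda>I. if I = {} then 1 else 0)"

definition ext_wedge :: "'n::linorder extv \<Rightarrow> 'n extv \<Rightarrow> 'n extv" where
  "ext_wedge a b = (\<lambda>A. \<Sum>I\<in>Pow A. inv_sign I (A - I) * a I * b (A - I))"

definition ext_vec :: "real ^ 'n \<Rightarrow> 'n extv" where
  "ext_vec v = (\<lambda>I. if card I = 1 then v $ the_elem I else 0)"

text \<open>bar h: <bar h v, w> = h v w.\<close>
definition hbar :: "(real ^ 'n \<Rightarrow> real ^ 'n \<Rightarrow> real) \<Rightarrow> real ^ 'n \<Rightarrow> real ^ 'n" where
  "hbar h v = (\<chi> j. h v (axis j 1))"

definition hat_basis :: "(real ^ ('n::{finite,linorder}) \<Rightarrow> real ^ ('n::{finite,linorder}) \<Rightarrow> real) \<Rightarrow> ('n::{finite,linorder}) set \<Rightarrow> ('n::{finite,linorder}) extv" where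
  "hat_basis h I = foldr ext_wedge (map (\<lambda>i. ext_vec (hbar h (axis i 1))) (sorted_list_of_set I)) ext_one"

definition hat :: "(real ^ ('n::{finite,linorder}) \<Rightarrow> real ^ ('n::{finite,linorder}) \<Rightarrow> real) \<Rightarrow> ('n::{finite,linorder}) extv \<Rightarrow> ('n::{finite,linorder}) extv" where
  "hat h \<theta> = (\<lambda>L. \<Sum>I\<in>UNIV. \<theta> I * hat_basis h I L)"

text \<open>hat_R (theta1 (x) theta2) = theta1 (x) hat h theta2, extended linearly.\<close>
definition hatR :: "(real ^ ('n::{finite,linorder}) \<Rightarrow> real ^ ('n::{finite,linorder}) \<Rightarrow> real) \<Rightarrow> ('n::{finite,linorder}) dvec \<Rightarrow> ('n::{finite,linorder}) dvec" where
  "hatR h \<omega> = (\<lambda>I L. \<Sum>J\<in>UNIV. \<omega> I J * hat_basis h J L)"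

text \<open>hat_L (theta1 (x) theta2) = hat h theta1 (x) theta2, extended linearly.\<close>
definition hatL :: "(real ^ ('n::{finite,linorder}) \<Rightarrow> real ^ ('n::{finite,linorder}) \<Rightarrow> real) \<Rightarrow> ('n::{finite,linorder}) dvec \<Rightarrow> ('n::{finite,linorder}) dvec" where
  "hatL h \<omega> = (\<lambda>K J. \<Sum>I\<in>UNIV. \<omega> I J * hat_basis h I K)"

text \<open>Exterior product of double vectors:
  (theta1 (x) theta2)(theta3 (x) theta4) = (theta1 wedge theta3) (x) (theta2 wedge theta4).\<close>
definition dmult :: "'n::linorder dvec \<Rightarrow> 'n dvec \<Rightarrow> 'n dvec" where
  "dmult \<omega> \<psi> = (\<lambda>A B. \<Sum>I\<in>Pow A. \<Sum>J\<in>Pow B.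
      inv_sign I (A - I) * inv_sign J (B - J) * \<omega> I J * \<psi> (A - I) (B - J))"

definition dv_one :: "'n dvec" where
  "dv_one = (\<lambda>I J. if I = {} \<and> J = {} then 1 else 0)"

primrec dpow :: "'n::linorder dvec \<Rightarrow> nat \<Rightarrow> 'n dvec" where
  "dpow \<omega> 0 = dv_one"
| "dpow \<omega> (Suc p) = dmult \<omega> (dpow \<omega> p)"

definition dexp :: "'n::linorder dvec \<Rightarrow> 'n dvec" where
  "dexp \<omega> = (\<lambda>A B. \<Sum>p. dpow \<omega> p A B / fact p)"

text \<open>Composition product: (e_I (x) e_J) o (e_K (x) e_L) = <e_I, e_L> e_K (x) e_J, extended bilinearly;
  the basis (e_I) of Lambda V is orthonormal for the induced inner product.\<close>
definition dcomp :: "'n::finite dvec \<Rightarrow> 'n dvec \<Rightarrow> 'n dvec" where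
  "dcomp \<omega> \<psi> = (\<lambda>K J. \<Sum>I\<in>UNIV. \<omega> I J * \<psi> K I)"

definition form_dvec :: "(real ^ 'n \<Rightarrow> real ^ 'n \<Rightarrow> real) \<Rightarrow> 'n dvec" where
  "form_dvec h = (\<lambda>A B. if card A = 1 \<and> card B = 1
      then h (axis (the_elem A) 1) (axis (the_elem B) 1) else 0)"

definition form_transpose :: "('a \<Rightarrow> 'a \<Rightarrow> real) \<Rightarrow> 'a \<Rightarrow> 'a \<Rightarrow> real" where
  "form_transpose h = (\<lambda>x y. h y x)"

end

theory Submission
  imports Defs
begin

definition sgnb :: "'n::linorder set \<Rightarrow> ('n \<Rightarrow> 'n) \<Rightarrow> real" where
  "sgnb A t = (-1) ^ card {(x,y). x \<in> A \<and> y \<in> A \<and> x < y \<and> t y < t x}"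

definition bijs :: "'n set \<Rightarrow> 'n set \<Rightarrow> ('n \<Rightarrow> 'n) set" where
  "bijs A B = {t. bij_betw t A B \<and> (\<forall>x. x \<notin> A \<longrightarrow> t x = x)}"

lemma bijs_fiber:
  assumes "a \<in> A" "b \<in> B"
  shows "{t \<in> bijs A B. t a = b} = (\<lambda>s. s(a:=b)) ` bijs (A-{a}) (B-{b})"
proof
  show "{t \<in> bijs A B. t a = b} \<subseteq> (\<lambda>s. s(a:=b)) ` bijs (A-{a}) (B-{b})"
  proof
    fix t assume t: "t \<in> {t \<in> bijs A B. t a = b}"
    hence bt: "bij_betw t A B" and out: "\<forall>x. x \<notin> A \<longrightarrow> t x = x" and ta: "t a = b"
      by (auto simp: bijs_def)
    have "bij_betw t (A-{a}) (B-{b})"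
      using bij_betw_DiffI[OF bt, of "{a}" "{b}"] assms ta by auto
    hence "bij_betw (t(a:=a)) (A-{a}) (B-{b})"
      by (rule bij_betw_cong[THEN iffD1, rotated]) auto
    hence "t(a:=a) \<in> bijs (A-{a}) (B-{b})" using out by (auto simp: bijs_def)
    moreover have "t = (t(a:=a))(a:=b)" using ta by auto
    ultimately show "t \<in> (\<lambda>s. s(a:=b)) ` bijs (A-{a}) (B-{b})" by blast
  qed
next
  show "(\<lambda>s. s(a:=b)) ` bijs (A-{a}) (B-{b}) \<subseteq> {t \<in> bijs A B. t a = b}"
  proof
    fix t assume "t \<in> (\<lambda>s. s(a:=b)) ` bijs (A-{a}) (B-{b})"
    then obtain s where s: "s \<in> bijs (A-{a}) (B-{b})" and t: "t = s(a:=b)" by blast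
    hence bs: "bij_betw s (A-{a}) (B-{b})" and out: "\<forall>x. x \<notin> A-{a} \<longrightarrow> s x = x"
      by (auto simp: bijs_def)
    have b1: "bij_betw t (A-{a}) (B-{b})"
      unfolding t by (rule bij_betw_cong[THEN iffD1, OF _ bs]) auto
    have b2: "bij_betw t {a} {b}" using t by simp
    have "bij_betw t ((A-{a}) \<union> {a}) ((B-{b}) \<union> {b})"
      by (rule bij_betw_combine[OF b1 b2]) auto
    hence "bij_betw t A B" using assms by (simp add: insert_absorb)
    thus "t \<in> {t \<in> bijs A B. t a = b}" using out t assms by (auto simp: bijs_def)
  qed
qed

lemma bijs_inj: "inj_on (\<lambda>s. s(a:=b)) (bijs (A-{a}) B')"
  unfolding inj_on_def bijs_def
proof (intro ballI impI ext)
  fix s s' x assume s: "s \<in> {t. bij_betw t (A - {a}) B' \<and> (\<forall>x. x \<notin> A - {a} \<longrightarrow> t x = x)}"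
    and s': "s' \<in> {t. bij_betw t (A - {a}) B' \<and> (\<forall>x. x \<notin> A - {a} \<longrightarrow> t x = x)}"
    and e: "s(a := b) = s'(a := b)"
  show "s x = s' x"
  proof (cases "x = a")
    case True thus ?thesis using s s' by auto
  next
    case False thus ?thesis using fun_cong[OF e, of x] by auto
  qed
qed


lemma inv_sign_single: "inv_sign {a} S = (-1) ^ card {k \<in> S. k < a}"
proof -
  have "{(i, k). i \<in> {a} \<and> k \<in> S \<and> k < i} = (\<lambda>k. (a,k)) ` {k \<in> S. k < a}" by auto
  moreover have "inj_on (\<lambda>k. (a,k)) {k \<in> S. k < a}" by (auto simp: inj_on_def)
  ultimately show ?thesis unfolding inv_sign_def by (simp add: card_image)
qed

lemma sgnb_upd:
  fixes A B :: "'n::{finite,linorder} set"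
  assumes aA: "a \<in> A" and bB: "b \<in> B" and s: "s \<in> bijs (A-{a}) (B-{b})"
  shows "sgnb A (s(a:=b)) = inv_sign {a} (A-{a}) * inv_sign {b} (B-{b}) * sgnb (A-{a}) s"
proof -
  define t where "t = s(a:=b)"
  define X where "X = A - {a}"
  have bs: "bij_betw s X (B-{b})" using s by (auto simp: bijs_def X_def)
  define P where "P = {(x,y). x \<in> A \<and> y \<in> A \<and> x < y \<and> t y < t x}"
  define P0 where "P0 = {(x,y). x \<in> X \<and> y \<in> X \<and> x < y \<and> s y < s x}"
  define U where "U = {x \<in> X. x < a}"
  define W where "W = {x \<in> X. s x < b}"
  have sX: "\<And>x. x \<in> X \<Longrightarrow> s x \<in> B \<and> s x \<noteq> b" using bs by (auto simp: bij_betw_def)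
  have tX: "\<And>x. x \<in> X \<Longrightarrow> t x = s x" "t a = b" by (auto simp: t_def X_def)
  have Peq: "P = P0 \<union> (\<lambda>x. (x,a)) ` (U - W) \<union> (\<lambda>y. (a,y)) ` (W - U)"
  proof (rule set_eqI, rule iffI)
    fix p assume "p \<in> P"
    then obtain x y where p: "p = (x,y)" "x \<in> A" "y \<in> A" "x < y" "t y < t x" by (auto simp: P_def)
    show "p \<in> P0 \<union> (\<lambda>x. (x,a)) ` (U - W) \<union> (\<lambda>y. (a,y)) ` (W - U)"
    proof (cases "x = a")
      case True
      hence "y \<in> X" using p by (auto simp: X_def)
      hence "y \<in> W - U" using p True tX by (auto simp: W_def U_def)
      thus ?thesis using p True by auto
    next
      case xa: False
      show ?thesis
      proof (cases "y = a")
        case True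
        hence "x \<in> X" using p xa by (auto simp: X_def)
        hence "x \<in> U - W" using p True tX by (auto simp: W_def U_def)
        thus ?thesis using p True by auto
      next
        case False
        hence "x \<in> X" "y \<in> X" using p xa by (auto simp: X_def)
        thus ?thesis using p tX by (auto simp: P0_def)
      qed
    qed
  next
    fix p assume p: "p \<in> P0 \<union> (\<lambda>x. (x,a)) ` (U - W) \<union> (\<lambda>y. (a,y)) ` (W - U)"
    have XA: "X \<subseteq> A" "a \<notin> X" by (auto simp: X_def)
    show "p \<in> P"
    proof -
      { assume "p \<in> P0" hence ?thesis using tX XA by (auto simp: P0_def P_def) }
      moreover
      { fix x assume x: "x \<in> U - W" "p = (x,a)"
        hence "x \<in> X" "x < a" "\<not> s x < b" "s x \<noteq> b" using sX by (auto simp: U_def W_def)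
        hence ?thesis using x tX XA aA by (auto simp: P_def) }
      moreover
      { fix y assume y: "y \<in> W - U" "p = (a,y)"
        hence "y \<in> X" "\<not> y < a" "s y < b" "y \<noteq> a" using XA by (auto simp: U_def W_def)
        hence ?thesis using y tX XA aA by (auto simp: P_def) }
      ultimately show ?thesis using p by blast
    qed
  qed
  have cP: "card P = card P0 + card (U - W) + card (W - U)"
  proof -
    have d1: "P0 \<inter> ((\<lambda>x. (x,a)) ` (U - W)) = {}" by (auto simp: P0_def U_def X_def)
    have d2: "(P0 \<union> (\<lambda>x. (x,a)) ` (U - W)) \<inter> (\<lambda>y. (a,y)) ` (W - U) = {}"
      by (auto simp: P0_def U_def W_def X_def)
    have i1: "card ((\<lambda>x. (x,a)) ` (U - W)) = card (U - W)" by (rule card_image) (auto simp: inj_on_def)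
    have i2: "card ((\<lambda>y. (a,y)) ` (W - U)) = card (W - U)" by (rule card_image) (auto simp: inj_on_def)
    show ?thesis unfolding Peq
      by (subst card_Un_disjoint[OF _ _ d2], simp, simp, subst card_Un_disjoint[OF _ _ d1]) (auto simp: i1 i2)
  qed
  have cU: "card {k \<in> A-{a}. k < a} = card U" by (simp add: U_def X_def)
  have cW: "card {k \<in> B-{b}. k < b} = card W"
  proof -
    have "{k \<in> B-{b}. k < b} = s ` W" using bs by (auto simp: W_def bij_betw_def)
    moreover have "inj_on s W" using bs by (auto simp: W_def bij_betw_def inj_on_def)
    ultimately show ?thesis by (simp add: card_image)
  qed
  have U2: "card U = card (U - W) + card (U \<inter> W)"
    using card_Un_disjoint[of "U-W" "U\<inter>W"] by (simp add: Un_Diff_Int) blast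
  have W2: "card W = card (W - U) + card (U \<inter> W)"
    using card_Un_disjoint[of "W-U" "W\<inter>U"] by (simp add: Un_Diff_Int Int_commute[of U W]) blast
  have m1: "((-1::real) ^ card (U \<inter> W)) * (-1) ^ card (U \<inter> W) = 1"
    by (simp flip: power_add add: power_mult[of "-1::real" 2, simplified mult_2, symmetric] )
  show ?thesis
    unfolding t_def[symmetric] sgnb_def P_def[symmetric] inv_sign_single cU cW
    unfolding X_def[symmetric] P0_def[symmetric] cP U2 W2 power_add
    using m1 by (simp add: algebra_simps)
qed


definition Dt :: "('n::{finite,linorder} \<Rightarrow> 'n \<Rightarrow> real) \<Rightarrow> 'n set \<Rightarrow> 'n set \<Rightarrow> real" where
  "Dt g A B = (\<Sum>t\<in>bijs A B. sgnb A t * (\<Prod>x\<in>A. g x (t x)))"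

lemma laplace:
  fixes A B :: "'n::{finite,linorder} set"
  assumes aA: "a \<in> A"
  shows "Dt g A B = (\<Sum>b\<in>B. inv_sign {a} (A-{a}) * inv_sign {b} (B-{b}) * g a b * Dt g (A-{a}) (B-{b}))"
proof -
  let ?F = "\<lambda>t. sgnb A t * (\<Prod>x\<in>A. g x (t x))"
  have img: "(\<lambda>t. t a) ` bijs A B \<subseteq> B" using aA by (auto simp: bijs_def bij_betw_def)
  have "Dt g A B = (\<Sum>b\<in>B. \<Sum>t\<in>{t \<in> bijs A B. t a = b}. ?F t)"
    unfolding Dt_def by (rule sum.group[symmetric]) (use img in auto)
  also have "\<dots> = (\<Sum>b\<in>B. inv_sign {a} (A-{a}) * inv_sign {b} (B-{b}) * g a b * Dt g (A-{a}) (B-{b}))"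
  proof (rule sum.cong[OF refl])
    fix b assume bB: "b \<in> B"
    have "(\<Sum>t\<in>{t \<in> bijs A B. t a = b}. ?F t) = (\<Sum>s\<in>bijs (A-{a}) (B-{b}). ?F (s(a:=b)))"
      unfolding bijs_fiber[OF aA bB] by (rule sum.reindex[OF bijs_inj, unfolded comp_def])
    also have "\<dots> = (\<Sum>s\<in>bijs (A-{a}) (B-{b}). inv_sign {a} (A-{a}) * inv_sign {b} (B-{b}) * g a b *
        (sgnb (A-{a}) s * (\<Prod>x\<in>A-{a}. g x (s x))))"
    proof (rule sum.cong[OF refl])
      fix s assume s: "s \<in> bijs (A-{a}) (B-{b})"
      have "(\<Prod>x\<in>A. g x ((s(a:=b)) x)) = g a b * (\<Prod>x\<in>A-{a}. g x ((s(a:=b)) x))"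
        using aA by (simp add: prod.remove)
      also have "(\<Prod>x\<in>A-{a}. g x ((s(a:=b)) x)) = (\<Prod>x\<in>A-{a}. g x (s x))"
        by (rule prod.cong) auto
      finally show "?F (s(a:=b)) = inv_sign {a} (A-{a}) * inv_sign {b} (B-{b}) * g a b *
        (sgnb (A-{a}) s * (\<Prod>x\<in>A-{a}. g x (s x)))"
        using sgnb_upd[OF aA bB s] by (simp add: algebra_simps)
    qed
    also have "\<dots> = inv_sign {a} (A-{a}) * inv_sign {b} (B-{b}) * g a b * Dt g (A-{a}) (B-{b})"
      unfolding Dt_def by (simp add: sum_distrib_left)
    finally show "(\<Sum>t\<in>{t \<in> bijs A B. t a = b}. ?F t) = inv_sign {a} (A-{a}) * inv_sign {b} (B-{b}) * g a b * Dt g (A-{a}) (B-{b})" .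
  qed
  finally show ?thesis .
qed

lemma Dt_empty: "Dt g {} B = (if B = {} then 1 else 0)"
proof -
  have "bijs {} B = (if B = {} then {id} else {})"
    by (auto simp: bijs_def bij_betw_def)
  thus ?thesis by (simp add: Dt_def sgnb_def)
qed


definition Hg :: "('n \<Rightarrow> 'n \<Rightarrow> real) \<Rightarrow> 'n dvec" where
  "Hg g = (\<lambda>A B. if card A = 1 \<and> card B = 1 then g (the_elem A) (the_elem B) else 0)"

lemma sum_pow_single:
  fixes A :: "'a set"
  assumes "finite A"
  shows "(\<Sum>I\<in>Pow A. if card I = 1 then F I else (0::real)) = (\<Sum>a\<in>A. F {a})"
proof -
  have "(\<Sum>I\<in>Pow A. if card I = 1 then F I else (0::real)) = (\<Sum>I\<in>{I\<in>Pow A. card I = 1}. F I)"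
    using assms by (simp add: sum.If_cases Int_def)
  also have "{I\<in>Pow A. card I = 1} = (\<lambda>a. {a}) ` A" by (auto simp: card_1_singleton_iff)
  also have "(\<Sum>I\<in>(\<lambda>a. {a}) ` A. F I) = (\<Sum>a\<in>A. F {a})" by (subst sum.reindex) (auto simp: inj_on_def)
  finally show ?thesis .
qed

lemma dmult_Hg:
  fixes A B :: "'n::{finite,linorder} set"
  shows "dmult (Hg g) X A B = (\<Sum>a\<in>A. \<Sum>b\<in>B. inv_sign {a} (A-{a}) * inv_sign {b} (B-{b}) * g a b * X (A-{a}) (B-{b}))"
proof -
  have "dmult (Hg g) X A B = (\<Sum>I\<in>Pow A. if card I = 1 then (\<Sum>J\<in>Pow B. if card J = 1 then
      inv_sign I (A - I) * inv_sign J (B - J) * g (the_elem I) (the_elem J) * X (A - I) (B - J) else 0) else 0)"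
    unfolding dmult_def Hg_def by (auto intro!: sum.cong)
  also have "\<dots> = (\<Sum>a\<in>A. \<Sum>b\<in>B. inv_sign {a} (A-{a}) * inv_sign {b} (B-{b}) * g a b * X (A-{a}) (B-{b}))"
    by (simp only: sum_pow_single[OF finite] the_elem_eq)
  finally show ?thesis .
qed

lemma dpow_Hg:
  fixes A B :: "'n::{finite,linorder} set"
  shows "dpow (Hg g) p A B = (if card A = p then fact p * Dt g A B else 0)"
proof (induction p arbitrary: A B)
  case 0
  show ?case by (auto simp: dv_one_def Dt_empty)
next
  case (Suc p)
  have "dpow (Hg g) (Suc p) A B = (\<Sum>a\<in>A. \<Sum>b\<in>B. inv_sign {a} (A-{a}) * inv_sign {b} (B-{b}) * g a b *
      (if card (A-{a}) = p then fact p * Dt g (A-{a}) (B-{b}) else 0))"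
    by (simp only: dpow.simps dmult_Hg Suc.IH)
  also have "\<dots> = (if card A = Suc p then fact (Suc p) * Dt g A B else 0)"
  proof (cases "card A = Suc p")
    case True
    have "(\<Sum>a\<in>A. \<Sum>b\<in>B. inv_sign {a} (A-{a}) * inv_sign {b} (B-{b}) * g a b *
      (if card (A-{a}) = p then fact p * Dt g (A-{a}) (B-{b}) else 0))
      = (\<Sum>a\<in>A. fact p * Dt g A B)"
    proof (rule sum.cong[OF refl])
      fix a assume aA: "a \<in> A"
      have c: "card (A-{a}) = p" using aA True by simp
      have "(\<Sum>b\<in>B. inv_sign {a} (A-{a}) * inv_sign {b} (B-{b}) * g a b *
        (if card (A-{a}) = p then fact p * Dt g (A-{a}) (B-{b}) else 0)) =
        (\<Sum>b\<in>B. fact p * (inv_sign {a} (A-{a}) * inv_sign {b} (B-{b}) * g a b * Dt g (A-{a}) (B-{b})))"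
        using c by (intro sum.cong refl) simp
      also have "\<dots> = fact p * Dt g A B" by (simp only: laplace[OF aA] sum_distrib_left)
      finally show "(\<Sum>b\<in>B. inv_sign {a} (A-{a}) * inv_sign {b} (B-{b}) * g a b *
        (if card (A-{a}) = p then fact p * Dt g (A-{a}) (B-{b}) else 0)) = fact p * Dt g A B" .
    qed
    also have "\<dots> = fact (Suc p) * Dt g A B" using True by simp
    finally show ?thesis using True by simp
  next
    case False
    have "card (A-{a}) \<noteq> p" if aA: "a \<in> A" for a
    proof -
      have "card (A-{a}) = card A - 1" using aA by simp
      moreover have "card A > 0" by (rule card_gt_0_iff[THEN iffD2]) (use aA in auto)
      ultimately show ?thesis using False by linarith
    qed
    thus ?thesis using False by simp
  qed
  finally show ?case .
qed

lemma dexp_Hg: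
  fixes A B :: "'n::{finite,linorder} set"
  shows "dexp (Hg g) A B = Dt g A B"
proof -
  have "(\<lambda>p. dpow (Hg g) p A B / fact p) = (\<lambda>p. if p = card A then Dt g A B else 0)"
    by (auto simp: dpow_Hg)
  moreover have "(\<lambda>p. if p = card A then Dt g A B else 0) sums Dt g A B"
    using sums_single[of "card A" "\<lambda>_. Dt g A B"] by simp
  ultimately show ?thesis unfolding dexp_def by (simp add: sums_iff)
qed


lemma wedge_vec:
  fixes L :: "'n::{finite,linorder} set"
  shows "ext_wedge (ext_vec v) Y L = (\<Sum>l\<in>L. inv_sign {l} (L-{l}) * v $ l * Y (L-{l}))"
proof -
  have "ext_wedge (ext_vec v) Y L = (\<Sum>I\<in>Pow L. if card I = 1 then inv_sign I (L-I) * v $ the_elem I * Y (L-I) else 0)"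
    unfolding ext_wedge_def ext_vec_def by (auto intro!: sum.cong)
  also have "\<dots> = (\<Sum>l\<in>L. inv_sign {l} (L-{l}) * v $ l * Y (L-{l}))"
    by (simp only: sum_pow_single[OF finite] the_elem_eq)
  finally show ?thesis .
qed

lemma hat_basis_cons:
  fixes J :: "'n::{finite,linorder} set"
  assumes "J \<noteq> {}"
  shows "hat_basis h J = ext_wedge (ext_vec (hbar h (axis (Min J) 1))) (hat_basis h (J - {Min J}))"
  using assms by (simp add: hat_basis_def sorted_list_of_set_nonempty)

lemma hat_basis_Dt:
  fixes J L :: "'n::{finite,linorder} set"
  shows "hat_basis h J L = Dt (\<lambda>x y. h (axis x 1) (axis y 1)) J L"
proof (induction "card J" arbitrary: J L)
  case 0
  hence "J = {}" by simp
  thus ?case by (simp add: hat_basis_def ext_one_def Dt_empty)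
next
  case (Suc n)
  hence Jne: "J \<noteq> {}" by auto
  define j where "j = Min J"
  have jJ: "j \<in> J" using Jne by (simp add: j_def)
  have s1: "inv_sign {j} (J - {j}) = 1"
  proof -
    have "{k \<in> J - {j}. k < j} = {}"
    proof -
      { fix k assume "k \<in> J" "k < j"
        hence False using Min_le[of J k, OF finite] leD unfolding j_def by blast }
      thus ?thesis by auto
    qed
    thus ?thesis by (simp only: inv_sign_single card.empty power_0)
  qed
  have cJ: "n = card (J - {j})" using Suc.hyps(2) jJ by simp
  show ?case
    unfolding hat_basis_cons[OF Jne] j_def[symmetric] wedge_vec laplace[OF jJ] s1
    using Suc.hyps(1)[OF cJ] by (simp add: hbar_def algebra_simps)
qed

lemma dpow_transpose:
  fixes A B :: "'n::{finite,linorder} set"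
  shows "dpow (\<lambda>A B. X B A) p A B = dpow X p B A"
proof (induction p arbitrary: A B)
  case 0 thus ?case by (auto simp: dv_one_def)
next
  case (Suc p)
  show ?case
    unfolding dpow.simps dmult_def Suc.IH
    by (subst sum.swap) (simp add: mult_ac)
qed

lemma form_dvec_Hg: "form_dvec h = Hg (\<lambda>x y. h (axis x 1) (axis y 1))"
  by (simp add: form_dvec_def Hg_def)

lemma form_dvec_T: "form_dvec (form_transpose h) = (\<lambda>A B. Hg (\<lambda>x y. h (axis x 1) (axis y 1)) B A)"
  by (auto simp: form_dvec_def Hg_def form_transpose_def fun_eq_iff)

theorem proposition1p8:
  fixes h :: "real ^ ('n::{finite,linorder}) \<Rightarrow> real ^ ('n::{finite,linorder}) \<Rightarrow> real"
    and \<omega> :: "('n::{finite,linorder}) dvec"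
  assumes "bilinear h"
  shows "hatR h \<omega> = dcomp (dexp (form_dvec h)) \<omega>
     \<and> hatL h \<omega> = dcomp \<omega> (dexp (form_dvec (form_transpose h)))"
proof
  let ?g = "\<lambda>x y. h (axis x 1) (axis y 1)"
  have e1: "dexp (form_dvec h) J L = hat_basis h J L" for J L
    by (simp only: form_dvec_Hg dexp_Hg hat_basis_Dt)
  show "hatR h \<omega> = dcomp (dexp (form_dvec h)) \<omega>"
    unfolding hatR_def dcomp_def e1 by (intro ext sum.cong refl) (simp only: mult.commute)
  have e2: "dexp (form_dvec (form_transpose h)) K I = hat_basis h I K" for K I
  proof -
    have "dexp (form_dvec (form_transpose h)) K I = (\<Sum>p. dpow (Hg ?g) p I K / fact p)"
      by (simp only: form_dvec_T dexp_def dpow_transpose[of "Hg ?g"])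
    also have "\<dots> = dexp (Hg ?g) I K" by (simp only: dexp_def)
    finally show ?thesis unfolding dexp_Hg hat_basis_Dt .
  qed
  show "hatL h \<omega> = dcomp \<omega> (dexp (form_dvec (form_transpose h)))"
    by (simp only: hatL_def dcomp_def e2)
qed

end
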